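(* Let $H$ be an ASC-hypergraph on the carrier $\{1,\dots,d+1\}$ with $d\ge0$, and let $\{v\}$ be a vertex of the polytope $\mathcal G(H)$. Then there is a construction $K$ of $H$ such that $\{v\}=\bigcap\{\pi_X\mid X\in K\}$ and $v\notin\pi_Y$ for every $Y\in H\setminus K$.
   Context: A hypergraph is a finite set $H$ of nonempty subsets of some finite set; its carrier is $\bigcup H$. For a family $F$ and set $Y$, $F_Y=\{X\in F\mid X\subseteq Y\}$. A hypergraph partition of $H$ is a partition $\{H_1,\dots,H_n\}$ ($n\ge0$) of the set $H$ with $\{\bigcup H_1,\dots,\bigcup H_n\}$ a partition of $\bigcup H$; $H$ is connected if it has exactly one hypergraph partition; the finest hypergraph partition is the unique one whose blocks are connected. $H$ is atomic if $\{x\}\in H$ for all $x\in\bigcup H$; saturated if $X_1,X_2\in H$ with $X_1\cap X_2\neq\emptyset$ imply $X_1\cup X_2\in H$. An ASC-hypergraph is one that is atomic, saturated and connected. Constructions of an atomic $H$, by induction on $|\bigcup H|$: (0) $\emptyset$ is the only construction of $\emptyset$; (1) if $|\bigcup H|\ge1$, $H$ connected, $x\in\bigcup H$, $K$ a construction of $H_{\bigcup H\setminus\{x\}}$, then $K\cup\{\bigcup H\}$ is a construction of $H$; (2) if $H$ is not connected with finest hypergraph partition $\{H_1,\dots,H_n\}$, $n\ge2$, and $K_i$ is a construction of $H_i$, then $K_1\cup\dots\cup K_n$ is a construction of $H$. For $X\in H$ let $\pi_X=\{(x_1,\dots,x_{d+1})\in\mathbb R^{d+1}\mid\sum_{i\in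 X}x_i=3^{|X|}\}$ and $\pi_X^+=\{(x_1,\dots,x_{d+1})\in\mathbb R^{d+1}\mid\sum_{i\in X}x_i\ge3^{|X|}\}$. Define the convex polytope $\mathcal G(H)=\bigcap\{\pi_X^+\mid X\in H\setminus\{\bigcup H\}\}\cap\pi_{\bigcup H}$. *)

theory Defs
  imports "HOL-Analysis.Analysis"
begin

definition hypergraph :: "'a set set \<Rightarrow> bool" where
  "hypergraph H \<longleftrightarrow> finite H \<and> {} \<notin> H \<and> finite (\<Union>H)"

definition restr :: "'a set set \<Rightarrow> 'a set \<Rightarrow> 'a set set" where
  "restr F Y = {X \<in> F. X \<subseteq> Y}"

text \<open>Hypergraph partition: P is a partition of the set H, and the unions of the
  (distinct) blocks form a partition of the carrier (nonemptiness of the unions is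
  automatic since blocks are nonempty and edges are nonempty; covering is automatic).\<close>
definition hpartition :: "'a set set \<Rightarrow> 'a set set set \<Rightarrow> bool" where
  "hpartition H P \<longleftrightarrow>
     (\<forall>B\<in>P. B \<noteq> {}) \<and> \<Union>P = H \<and>
     (\<forall>B\<in>P. \<forall>C\<in>P. B \<noteq> C \<longrightarrow> B \<inter> C = {}) \<and>
     (\<forall>B\<in>P. \<forall>C\<in>P. B \<noteq> C \<longrightarrow> \<Union>B \<inter> \<Union>C = {}) \<and>
     (\<forall>B\<in>P. \<Union>B \<noteq> {})"

definition hconnected :: "'a set set \<Rightarrow> bool" where
  "hconnected H \<longleftrightarrow> (\<exists>!P. hpartition H P)"

definition finest_hpartition :: "'a set set \<Rightarrow> 'a set set set \<Rightarrow> bool" where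
  "finest_hpartition H P \<longleftrightarrow> hpartition H P \<and> (\<forall>B\<in>P. hconnected B)"

definition atomic :: "'a set set \<Rightarrow> bool" where
  "atomic H \<longleftrightarrow> (\<forall>x\<in>\<Union>H. {x} \<in> H)"

definition saturated :: "'a set set \<Rightarrow> bool" where
  "saturated H \<longleftrightarrow> (\<forall>X1\<in>H. \<forall>X2\<in>H. X1 \<inter> X2 \<noteq> {} \<longrightarrow> X1 \<union> X2 \<in> H)"

definition ASC :: "'a set set \<Rightarrow> bool" where
  "ASC H \<longleftrightarrow> hypergraph H \<and> atomic H \<and> saturated H \<and> hconnected H"

inductive construction :: "'a set set \<Rightarrow> 'a set set \<Rightarrow> bool" where
  empty: "construction {} {}"
| conn: "\<lbrakk>atomic H; \<Union>H \<noteq> {}; hconnected H; x \<in> \<Union>H;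
          construction (restr H (\<Union>H - {x})) K\<rbrakk>
         \<Longrightarrow> construction H (insert (\<Union>H) K)"
| disconn: "\<lbrakk>atomic H; \<not> hconnected H; finest_hpartition H P; card P \<ge> 2;
             \<forall>B\<in>P. construction B (Kf B)\<rbrakk>
         \<Longrightarrow> construction H (\<Union>B\<in>P. Kf B)"

definition hplane :: "'n set \<Rightarrow> (real^'n) set" where
  "hplane X = {x. (\<Sum>i\<in>X. x $ i) = 3 ^ card X}"

definition hhalf :: "'n set \<Rightarrow> (real^'n) set" where
  "hhalf X = {x. (\<Sum>i\<in>X. x $ i) \<ge> 3 ^ card X}"

definition GH :: "'n set set \<Rightarrow> (real^'n) set" where
  "GH H = \<Inter>(hhalf ` (H - {\<Union>H})) \<inter> hplane (\<Union>H)"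

end

theory Submission
  imports Defs
begin

lemma xy_lt:
  fixes x y :: real
  assumes "3 \<le> x" "3 \<le> y"
  shows "x + y < x * y"
proof -
  have "2 * 2 \<le> (x - 1) * (y - 1)" using assms by (intro mult_mono) auto
  then show ?thesis by (simp add: algebra_simps)
qed

lemma pow3_add_lt:
  fixes a b :: nat
  assumes "1 \<le> a" "1 \<le> b"
  shows "(3::real)^a + 3^b < 3^(a+b)"
proof -
  have x: "(3::real)^1 \<le> 3^a" using assms(1) by (intro power_increasing) auto
  have y: "(3::real)^1 \<le> 3^b" using assms(2) by (intro power_increasing) auto
  have "(3::real)^(a+b) = 3^a * 3^b" by (simp add: power_add)
  moreover have "(3::real)^a * 3^b \<ge> 3^a * 3" using x y by simp
  moreover have "(3::real)^a * 3^b \<ge> 3 * 3^b" using x y by simp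
  ultimately show ?thesis using x y xy_lt[of "3^a" "3^b"] by simp
qed

lemma sum_pow3_le:
  fixes f :: "'a \<Rightarrow> nat"
  assumes "finite F" "F \<noteq> {}" "\<forall>M\<in>F. 1 \<le> f M"
  shows "(\<Sum>M\<in>F. (3::real)^f M) \<le> 3^(\<Sum>M\<in>F. f M)"
  using assms
proof (induction F rule: finite_ne_induct)
  case (singleton x) then show ?case by simp
next
  case (insert x F)
  obtain y where y: "y \<in> F" using insert by blast
  have "f y \<le> (\<Sum>M\<in>F. f M)" using insert y by (intro member_le_sum) auto
  then have s: "1 \<le> (\<Sum>M\<in>F. f M)" using insert y by auto
  have "(\<Sum>M\<in>insert x F. (3::real)^f M) = 3^f x + (\<Sum>M\<in>F. 3^f M)" using insert by simp
  also have "\<dots> \<le> 3^f x + 3^(\<Sum>M\<in>F. f M)" using insert by simp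
  also have "\<dots> < 3^(f x + (\<Sum>M\<in>F. f M))" using pow3_add_lt insert s by simp
  finally show ?case using insert by simp
qed

lemma sum_pow3_lt:
  fixes f :: "'a \<Rightarrow> nat"
  assumes "finite F" "2 \<le> card F" "\<forall>M\<in>F. 1 \<le> f M"
  shows "(\<Sum>M\<in>F. (3::real)^f M) < 3^(\<Sum>M\<in>F. f M)"
proof -
  obtain x where x: "x \<in> F" using assms by fastforce
  let ?F = "F - {x}"
  have "card ?F \<ge> 1" using assms x by simp
  then have ne: "?F \<noteq> {}" by (metis card.empty not_one_le_zero)
  have fin: "finite ?F" using assms by simp
  obtain y where y: "y \<in> ?F" using ne by blast
  have "f y \<le> (\<Sum>M\<in>?F. f M)" using fin y by (intro member_le_sum) auto
  then have s: "1 \<le> (\<Sum>M\<in>?F. f M)" using assms y by auto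
  have "(\<Sum>M\<in>F. (3::real)^f M) = 3^f x + (\<Sum>M\<in>?F. 3^f M)" using assms x by (simp add: sum.remove)
  also have "\<dots> \<le> 3^f x + 3^(\<Sum>M\<in>?F. f M)" using sum_pow3_le[OF fin ne] assms by simp
  also have "\<dots> < 3^(f x + (\<Sum>M\<in>?F. f M))" using pow3_add_lt assms x s by simp
  also have "\<dots> = 3^(\<Sum>M\<in>F. f M)" using assms x by (simp add: sum.remove)
  finally show ?thesis .
qed

lemma connected_if_top:
  assumes "D \<in> G" "\<Union>G = D" "{} \<notin> G"
  shows "hconnected G"
proof -
  have p: "hpartition G {G}" unfolding hpartition_def using assms by auto
  have u: "P = {G}" if h: "hpartition G P" for P
  proof -
    have h1: "\<Union>P = G" and h2: "\<forall>B\<in>P. \<forall>C\<in>P. B \<noteq> C \<longrightarrow> \<Union>B \<inter> \<Union>C = {}"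
      and h3: "\<forall>B\<in>P. \<Union>B \<noteq> {}" using h unfolding hpartition_def by auto
    obtain B where B: "B \<in> P" "D \<in> B" using h1 assms by auto
    have "B' = B" if "B' \<in> P" for B'
    proof (rule ccontr)
      assume "B' \<noteq> B"
      then have 1: "\<Union>B' \<inter> \<Union>B = {}" using h2 that B by blast
      have "B' \<subseteq> G" using h1 that by blast
      then have "\<Union>B' \<subseteq> \<Union>G" by (rule Union_mono)
      then have 2: "\<Union>B' \<subseteq> D" using assms(2) by simp
      have 3: "D \<subseteq> \<Union>B" using B by blast
      from 1 2 3 have "\<Union>B' = {}" by blast
      then show False using h3 that by blast
    qed
    then have "P = {B}" using B by blast
    then show ?thesis using h1 by simp
  qed
  show ?thesis unfolding hconnected_def using p u by blast
qed

definition maxel :: "'a set set \<Rightarrow> 'a set set" where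
  "maxel G = {D\<in>G. \<forall>D'\<in>G. D \<subseteq> D' \<longrightarrow> D' = D}"

lemma maxel_sub: "maxel G \<subseteq> G" unfolding maxel_def by auto

lemma maxel_cover:
  assumes "finite G" "X \<in> G" shows "\<exists>D\<in>maxel G. X \<subseteq> D"
proof -
  obtain m where m: "m \<in> G" "X \<subseteq> m" "\<forall>b\<in>G. m \<subseteq> b \<longrightarrow> m = b"
    using finite_has_maximal2[OF assms] by blast
  then have "m \<in> maxel G" unfolding maxel_def by auto
  then show ?thesis using m by blast
qed

lemma maxel_disj:
  assumes "saturated G" "D1 \<in> maxel G" "D2 \<in> maxel G" "D1 \<noteq> D2"
  shows "D1 \<inter> D2 = {}"
proof (rule ccontr)
  assume "D1 \<inter> D2 \<noteq> {}"
  moreover have "D1 \<in> G" "D2 \<in> G" using assms(2,3) maxel_sub by auto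
  ultimately have "D1 \<union> D2 \<in> G" using assms(1) unfolding saturated_def by blast
  moreover have "\<forall>D'\<in>G. D1 \<subseteq> D' \<longrightarrow> D' = D1" "\<forall>D'\<in>G. D2 \<subseteq> D' \<longrightarrow> D' = D2"
    using assms(2,3) unfolding maxel_def by auto
  ultimately have "D1 \<union> D2 = D1" "D1 \<union> D2 = D2" by auto
  then show False using assms(4) by simp
qed

lemma maxel_Union:
  assumes "finite G" shows "\<Union>(maxel G) = \<Union>G"
  using maxel_cover[OF assms] maxel_sub by blast

lemma Union_restr: "D \<in> G \<Longrightarrow> \<Union>(restr G D) = D"
  unfolding restr_def by auto

lemma maxel_partition:
  assumes "finite G" "{} \<notin> G" "saturated G"
  shows "finest_hpartition G (restr G ` maxel G)"
    and "inj_on (restr G) (maxel G)"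
proof -
  show inj: "inj_on (restr G) (maxel G)"
  proof (rule inj_onI)
    fix D E assume "D \<in> maxel G" "E \<in> maxel G" "restr G D = restr G E"
    then show "D = E" using Union_restr[of D G] Union_restr[of E G] maxel_sub[of G] by auto
  qed
  have hp: "hpartition G (restr G ` maxel G)"
    unfolding hpartition_def
  proof (intro conjI ballI impI)
    fix B assume "B \<in> restr G ` maxel G"
    then obtain D where D: "D \<in> maxel G" "B = restr G D" by blast
    then have "D \<in> G" using maxel_sub by blast
    then have "D \<in> B" "D \<noteq> {}" using D assms(2) unfolding restr_def by auto
    then show "B \<noteq> {}" "\<Union>B \<noteq> {}" by auto
  next
    show "\<Union>(restr G ` maxel G) = G"
    proof
      show "\<Union>(restr G ` maxel G) \<subseteq> G" unfolding restr_def by auto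
      show "G \<subseteq> \<Union>(restr G ` maxel G)"
      proof
        fix X assume X: "X \<in> G"
        obtain D where "D \<in> maxel G" "X \<subseteq> D" using maxel_cover[OF assms(1) X] by blast
        then show "X \<in> \<Union>(restr G ` maxel G)" using X unfolding restr_def by blast
      qed
    qed
  next
    fix B C assume B: "B \<in> restr G ` maxel G" and C: "C \<in> restr G ` maxel G" and ne: "B \<noteq> C"
    obtain D where D: "D \<in> maxel G" "B = restr G D" using B by blast
    obtain E where E: "E \<in> maxel G" "C = restr G E" using C by blast
    have "D \<noteq> E" using ne D E by blast
    then have de: "D \<inter> E = {}" using maxel_disj[OF assms(3) D(1) E(1)] by blast
    have "D \<in> G" "E \<in> G" using D E maxel_sub by auto
    then have uB: "\<Union>B = D" "\<Union>C = E" using D(2) E(2) Union_restr by auto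
    show "\<Union>B \<inter> \<Union>C = {}" using uB de by simp
    show "B \<inter> C = {}"
    proof (rule ccontr)
      assume "B \<inter> C \<noteq> {}"
      then obtain X where "X \<in> B" "X \<in> C" by blast
      then have "X \<subseteq> D \<inter> E" "X \<in> G" using D E unfolding restr_def by auto
      then show False using de assms(2) by auto
    qed
  qed
  show "finest_hpartition G (restr G ` maxel G)"
    unfolding finest_hpartition_def
  proof (intro conjI ballI hp)
    fix B assume "B \<in> restr G ` maxel G"
    then obtain D where D: "D \<in> maxel G" "B = restr G D" by blast
    then have "D \<in> G" using maxel_sub by blast
    then have "D \<in> B" "\<Union>B = D" using D Union_restr[of D G] unfolding restr_def by auto
    then show "hconnected B" using D assms(2) 
      by (intro connected_if_top[of D]) (auto simp: restr_def)
  qed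
qed

locale vtx =
  fixes H :: "('n::finite) set set" and v :: "real^'n"
  assumes ne: "{} \<notin> H" and atom: "\<And>i. {i} \<in> H" and sat: "saturated H"
    and ge: "\<And>X. X \<in> H \<Longrightarrow> 3^card X \<le> (\<Sum>i\<in>X. v$i)"
    and top: "(\<Sum>i\<in>UNIV. v$i) = 3^CARD('n)"
    and car: "\<Union>H = UNIV"
    and ext: "v extreme_point_of GH H"
begin

definition tight where "tight X \<longleftrightarrow> (\<Sum>i\<in>X. v$i) = 3^card X"
definition T where "T C = {X\<in>H. X \<subseteq> C \<and> tight X}"

lemma finH: "finite H"
  by simp

lemma coord: "3 \<le> v$i"
  using ge[OF atom[of i]] by simp

lemma laminar:
  assumes X: "X \<in> H" and Y: "Y \<in> H" and tX: "tight X" and tY: "tight Y" and i: "X \<inter> Y \<noteq> {}"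
  shows "X \<subseteq> Y \<or> Y \<subseteq> X"
proof (rule ccontr)
  assume nc: "\<not> (X \<subseteq> Y \<or> Y \<subseteq> X)"
  have U: "X \<union> Y \<in> H" using sat X Y i unfolding saturated_def by blast
  have eq: "(\<Sum>i\<in>X \<union> Y. v$i) + (\<Sum>i\<in>X \<inter> Y. v$i) = (\<Sum>i\<in>X. v$i) + (\<Sum>i\<in>Y. v$i)"
    by (rule sum.union_inter) auto
  have pos: "0 < (\<Sum>i\<in>X \<inter> Y. v$i)"
    using i coord by (intro sum_pos) (auto intro: less_le_trans[of 0 3])
  have c1: "card X < card (X \<union> Y)" using nc by (intro psubset_card_mono) auto
  have c2: "card Y < card (X \<union> Y)" using nc by (intro psubset_card_mono) auto
  have p1: "(3::real)^Suc (card X) \<le> 3^card (X \<union> Y)" using c1 by (intro power_increasing) auto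
  have p2: "(3::real)^Suc (card Y) \<le> 3^card (X \<union> Y)" using c2 by (intro power_increasing) auto
  have "3^card (X \<union> Y) \<le> (\<Sum>i\<in>X \<union> Y. v$i)" using ge[OF U] .
  moreover have "0 < (3::real)^card X" "0 < (3::real)^card Y" by auto
  moreover have "(\<Sum>i\<in>X. v$i) = 3^card X" "(\<Sum>i\<in>Y. v$i) = 3^card Y" using tX tY unfolding tight_def by auto
  moreover have "(3::real)^Suc (card X) = 3 * 3^card X" "(3::real)^Suc (card Y) = 3 * 3^card Y" by auto
  ultimately show False using eq pos p1 p2 by linarith
qed

lemma card_ge1: "M \<in> H \<Longrightarrow> 1 \<le> card M"
  using ne by (metis One_nat_def Suc_leI card_gt_0_iff finite)

lemma disj_union:
  assumes F: "F \<subseteq> H" "\<forall>M\<in>F. tight M" "\<forall>M1\<in>F. \<forall>M2\<in>F. M1 \<noteq> M2 \<longrightarrow> M1 \<inter> M2 = {}"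
  shows "(\<Sum>i\<in>\<Union>F. v$i) = (\<Sum>M\<in>F. 3^card M)" "card (\<Union>F) = (\<Sum>M\<in>F. card M)"
proof -
  have "(\<Sum>i\<in>\<Union>F. v$i) = (\<Sum>M\<in>F. (\<Sum>i\<in>M. v$i))"
    using sum.Union_disjoint[of F "\<lambda>i. v$i"] F by (simp add: o_def)
  also have "\<dots> = (\<Sum>M\<in>F. 3^card M)" using F unfolding tight_def by (intro sum.cong) auto
  finally show "(\<Sum>i\<in>\<Union>F. v$i) = (\<Sum>M\<in>F. 3^card M)" .
  have "pairwise disjnt F" using F unfolding pairwise_def disjnt_def by blast
  then show "card (\<Union>F) = (\<Sum>M\<in>F. card M)" by (intro card_Union_disjoint) auto
qed

lemma disj_lt:
  assumes F: "F \<subseteq> H" "\<forall>M\<in>F. tight M" "\<forall>M1\<in>F. \<forall>M2\<in>F. M1 \<noteq> M2 \<longrightarrow> M1 \<inter> M2 = {}"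
    and c: "2 \<le> card F"
  shows "(\<Sum>i\<in>\<Union>F. v$i) < 3^card (\<Union>F)"
proof -
  have fin: "finite F" using F(1) finH finite_subset by blast
  have "(\<Sum>M\<in>F. (3::real)^card M) < 3^(\<Sum>M\<in>F. card M)"
    using c F(1) card_ge1 by (intro sum_pow3_lt[OF fin]) auto
  then show ?thesis using disj_union[OF F] by simp
qed

lemma perturb:
  assumes C: "C \<in> H" "tight C" and ab: "a \<in> C" "b \<in> C" "a \<noteq> b"
    and nsub: "\<forall>X\<in>H. tight X \<longrightarrow> X \<subset> C \<longrightarrow> a \<notin> X \<and> b \<notin> X"
  shows False
proof -
  define w :: "real^'n" where "w = (\<chi> i. (if i = a then 1 else 0) - (if i = b then 1 else 0))"
  have sw: "(\<Sum>i\<in>X. w$i) = (if a \<in> X then 1 else 0) - (if b \<in> X then 1 else 0)" for X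
  proof -
    have "(\<Sum>i\<in>X. w$i) = (\<Sum>i\<in>X. (if i = a then 1 else 0)) - (\<Sum>i\<in>X. (if i = b then 1 else 0))"
      unfolding w_def by (simp add: sum_subtractf)
    also have "\<dots> = (if a \<in> X then 1 else 0) - (if b \<in> X then 1 else 0)"
      by (simp add: sum.delta)
    finally show ?thesis .
  qed
  have swb: "\<bar>\<Sum>i\<in>X. w$i\<bar> \<le> 1" for X unfolding sw by auto
  have Z: "(\<Sum>i\<in>X. w$i) = 0" if X: "X \<in> H" "tight X" for X
  proof (cases "a \<in> X \<or> b \<in> X")
    case True
    then have "X \<inter> C \<noteq> {}" using ab by blast
    then have "X \<subseteq> C \<or> C \<subseteq> X" using laminar[OF X(1) C(1) X(2) C(2)] by blast
    moreover have "\<not> X \<subset> C" using nsub X True by blast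
    ultimately have "C \<subseteq> X" by blast
    then show ?thesis unfolding sw using ab by auto
  next
    case False then show ?thesis unfolding sw by auto
  qed
  define NT where "NT = {X\<in>H. \<not> tight X}"
  define sl where "sl X = (\<Sum>i\<in>X. v$i) - 3^card X" for X
  have slpos: "0 < sl X" if "X \<in> NT" for X
    using that ge unfolding NT_def sl_def tight_def by (auto simp: less_le)
  define e where "e = Min (insert 1 (sl ` NT)) / 2"
  have finNT: "finite NT" unfolding NT_def by simp
  have epos: "0 < e" unfolding e_def using finNT slpos by auto
  have esl: "e < sl X" if "X \<in> NT" for X
  proof -
    have "Min (insert 1 (sl ` NT)) \<le> sl X" using finNT that by (intro Min_le) auto
    then show ?thesis unfolding e_def using slpos[OF that] by linarith
  qed
  have mem: "v + c *\<^sub>R w \<in> GH H" if c: "\<bar>c\<bar> \<le> e" for c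
  proof -
    have sumc: "(\<Sum>i\<in>X. (v + c *\<^sub>R w)$i) = (\<Sum>i\<in>X. v$i) + c * (\<Sum>i\<in>X. w$i)" for X
      by (simp add: sum.distrib sum_distrib_left)
    have half: "3^card X \<le> (\<Sum>i\<in>X. (v + c *\<^sub>R w)$i)" if X: "X \<in> H" for X
    proof (cases "tight X")
      case True then show ?thesis unfolding sumc using Z[OF X True] ge[OF X] by simp
    next
      case False
      then have "X \<in> NT" using X unfolding NT_def by auto
      then have "e < sl X" by (rule esl)
      moreover have "\<bar>c * (\<Sum>i\<in>X. w$i)\<bar> \<le> e"
      proof -
        have "\<bar>c * (\<Sum>i\<in>X. w$i)\<bar> = \<bar>c\<bar> * \<bar>\<Sum>i\<in>X. w$i\<bar>" by (simp add: abs_mult)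
        also have "\<dots> \<le> e * 1" using c swb[of X] by (intro mult_mono) auto
        finally show ?thesis by simp
      qed
      ultimately show ?thesis unfolding sumc sl_def by linarith
    qed
    have "(\<Sum>i\<in>UNIV. w$i) = 0" unfolding sw by simp
    then have pl: "(\<Sum>i\<in>UNIV. (v + c *\<^sub>R w)$i) = 3^CARD('n)" unfolding sumc using top by simp
    show ?thesis unfolding GH_def car hhalf_def hplane_def using half pl by auto
  qed
  define p where "p = v + e *\<^sub>R w"
  define q where "q = v + (-e) *\<^sub>R w"
  have pG: "p \<in> GH H" unfolding p_def using epos by (intro mem) auto
  have qG: "q \<in> GH H" unfolding q_def using epos by (intro mem) auto
  have "p $ a \<noteq> q $ a" unfolding p_def q_def w_def using epos ab by simp
  then have pq: "p \<noteq> q" by auto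
  have mid: "midpoint p q = v" unfolding p_def q_def midpoint_def
    by (simp add: vec_eq_iff algebra_simps)
  have "v \<in> open_segment p q" using pq mid midpoint_in_open_segment[of p q] by simp
  then show False using ext pG qG unfolding extreme_point_of_def by blast
qed

lemma main:
  assumes "C \<in> H" "tight C"
  shows "construction (restr H C) (T C) \<and>
    (\<forall>y::real^'n. (\<forall>X\<in>T C. (\<Sum>i\<in>X. y$i) = 3^card X) \<longrightarrow> (\<forall>i\<in>C. y$i = v$i))"
  using assms
proof (induction "card C" arbitrary: C rule: less_induct)
  case less
  note CH = less.prems(1) and Ct = less.prems(2)
  define T' where "T' = {X\<in>H. X \<subset> C \<and> tight X}"
  define Mt where "Mt = maxel T'"
  have finT': "finite T'" unfolding T'_def by simp
  have Mt_sub: "Mt \<subseteq> T'" unfolding Mt_def by (rule maxel_sub)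
  have Mt_cov: "\<exists>M\<in>Mt. X \<subseteq> M" if "X \<in> T'" for X
    unfolding Mt_def using maxel_cover[OF finT' that] .
  have Mt_disj: "M1 \<inter> M2 = {}" if M: "M1 \<in> Mt" "M2 \<in> Mt" "M1 \<noteq> M2" for M1 M2
  proof (rule ccontr)
    assume i: "M1 \<inter> M2 \<noteq> {}"
    have "M1 \<in> T'" "M2 \<in> T'" using M Mt_sub by auto
    then have "M1 \<subseteq> M2 \<or> M2 \<subseteq> M1" using laminar i unfolding T'_def by auto
    moreover have "\<forall>D'\<in>T'. M1 \<subseteq> D' \<longrightarrow> D' = M1" "\<forall>D'\<in>T'. M2 \<subseteq> D' \<longrightarrow> D' = M2"
      using M(1,2) unfolding Mt_def maxel_def by auto
    ultimately show False using \<open>M1 \<in> T'\<close> \<open>M2 \<in> T'\<close> M(3) by blast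
  qed
  have MtH: "Mt \<subseteq> H" "\<forall>M\<in>Mt. tight M" "\<forall>M\<in>Mt. M \<subset> C" using Mt_sub unfolding T'_def by auto
  have Cne: "C \<noteq> {}" using CH ne by auto
  have UC: "\<Union>Mt \<subseteq> C" using MtH by auto
  have Rne: "C - \<Union>Mt \<noteq> {}"
  proof
    assume "C - \<Union>Mt = {}"
    then have U: "\<Union>Mt = C" using UC by auto
    have finMt: "finite Mt" using finT' Mt_sub finite_subset by blast
    have "Mt \<noteq> {}" using U Cne by auto
    then have "card Mt \<noteq> 0" using finMt by auto
    show False
    proof (cases "2 \<le> card Mt")
      case True
      have F3: "\<forall>M1\<in>Mt. \<forall>M2\<in>Mt. M1 \<noteq> M2 \<longrightarrow> M1 \<inter> M2 = {}"
        using Mt_disj by auto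
      have "(\<Sum>i\<in>\<Union>Mt. v$i) < 3^card (\<Union>Mt)"
        using disj_lt[OF MtH(1,2) F3 True] .
      then show False using Ct U unfolding tight_def by simp
    next
      case False
      then have "card Mt = 1" using \<open>card Mt \<noteq> 0\<close> by linarith
      then obtain M where "Mt = {M}" by (rule card_1_singletonE)
      then show False using U MtH(3) by auto
    qed
  qed
  have R1: "a = b" if "a \<in> C - \<Union>Mt" "b \<in> C - \<Union>Mt" for a b
  proof (rule ccontr)
    assume "a \<noteq> b"
    moreover have "\<forall>X\<in>H. tight X \<longrightarrow> X \<subset> C \<longrightarrow> a \<notin> X \<and> b \<notin> X"
    proof (intro ballI impI)
      fix X assume "X \<in> H" "tight X" "X \<subset> C"
      then have "X \<in> T'" unfolding T'_def by auto
      then obtain M where "M \<in> Mt" "X \<subseteq> M" using Mt_cov by blast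
      then show "a \<notin> X \<and> b \<notin> X" using that by blast
    qed
    ultimately show False using perturb[OF CH Ct, of a b] that by blast
  qed
  obtain x where x: "C - \<Union>Mt = {x}" using Rne R1 by blast
  have xC: "x \<in> C" and UMt: "\<Union>Mt = C - {x}" using x UC by auto
  define H' where "H' = restr H (C - {x})"
  define Ms where "Ms = maxel H'"
  have finH': "finite H'" unfolding H'_def by simp
  have neH': "{} \<notin> H'" using ne unfolding H'_def restr_def by auto
  have satH': "saturated H'" using sat unfolding H'_def restr_def saturated_def by auto
  have H'H: "H' \<subseteq> H" unfolding H'_def restr_def by auto
  have UH': "\<Union>H' = C - {x}" unfolding H'_def restr_def using atom by auto
  have UMs: "\<Union>Ms = C - {x}" unfolding Ms_def using maxel_Union[OF finH'] UH' by simp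
  have MsH': "Ms \<subseteq> H'" unfolding Ms_def by (rule maxel_sub)
  have Ms_Mt: "D \<in> Mt" if D: "D \<in> Ms" for D
  proof -
    have DH': "D \<in> H'" using D MsH' by auto
    have DH: "D \<in> H" and DCx: "D \<subseteq> C - {x}" using DH' unfolding H'_def restr_def by auto
    have Dmax: "\<forall>D'\<in>H'. D \<subseteq> D' \<longrightarrow> D' = D" using D unfolding Ms_def maxel_def by auto
    have MinD: "M \<subseteq> D" if M: "M \<in> Mt" "M \<inter> D \<noteq> {}" for M
    proof -
      have "M \<in> H" "M \<subseteq> C - {x}" using M(1) MtH UMt by auto
      then have "M \<union> D \<in> H" using sat DH M(2) unfolding saturated_def by blast
      moreover have "M \<union> D \<subseteq> C - {x}" using \<open>M \<subseteq> C - {x}\<close> DCx by auto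
      ultimately have "M \<union> D \<in> H'" unfolding H'_def restr_def by auto
      then have "M \<union> D = D" using Dmax by auto
      then show ?thesis by auto
    qed
    define F where "F = {M\<in>Mt. M \<subseteq> D}"
    have DF: "D = \<Union>F"
    proof
      show "\<Union>F \<subseteq> D" unfolding F_def by auto
      show "D \<subseteq> \<Union>F"
      proof
        fix y assume "y \<in> D"
        then have "y \<in> \<Union>Mt" using DCx UMt by auto
        then obtain M where "M \<in> Mt" "y \<in> M" by auto
        then have "M \<subseteq> D" using MinD \<open>y \<in> D\<close> by blast
        then show "y \<in> \<Union>F" unfolding F_def using \<open>M \<in> Mt\<close> \<open>y \<in> M\<close> by auto
      qed
    qed
    have FMt: "F \<subseteq> Mt" unfolding F_def by auto
    have finF: "finite F" using FMt finH MtH(1) by (meson finite_subset)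
    have "D \<noteq> {}" using DH ne by auto
    then have "F \<noteq> {}" using DF by auto
    then have "card F \<noteq> 0" using finF by auto
    show ?thesis
    proof (cases "2 \<le> card F")
      case True
      have F1: "F \<subseteq> H" using FMt MtH(1) by auto
      have F2: "\<forall>M\<in>F. tight M" using FMt MtH(2) by auto
      have F3: "\<forall>M1\<in>F. \<forall>M2\<in>F. M1 \<noteq> M2 \<longrightarrow> M1 \<inter> M2 = {}"
      proof (intro ballI impI)
        fix M1 M2 assume "M1 \<in> F" "M2 \<in> F" "M1 \<noteq> M2"
        then show "M1 \<inter> M2 = {}" using Mt_disj[of M1 M2] FMt by auto
      qed
      have "(\<Sum>i\<in>\<Union>F. v$i) < 3^card (\<Union>F)"
        using disj_lt[OF F1 F2 F3 True] .
      then show ?thesis using ge[OF DH] DF by simp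
    next
      case False
      then have "card F = 1" using \<open>card F \<noteq> 0\<close> by linarith
      then obtain M where "F = {M}" by (rule card_1_singletonE)
      then show ?thesis using DF FMt by auto
    qed
  qed
  have Ms_good: "D \<in> H \<and> tight D \<and> D \<subseteq> C - {x} \<and> card D < card C" if D: "D \<in> Ms" for D
  proof -
    have "D \<in> Mt" using Ms_Mt D .
    then have "D \<in> H" "tight D" using MtH by auto
    moreover have "D \<subseteq> C - {x}" using D MsH' unfolding H'_def restr_def by auto
    moreover have "card D < card C" using \<open>D \<subseteq> C - {x}\<close> xC by (intro psubset_card_mono) auto
    ultimately show ?thesis by auto
  qed
  have IH: "construction (restr H D) (T D) \<and>
    (\<forall>y::real^'n. (\<forall>X\<in>T D. (\<Sum>i\<in>X. y$i) = 3^card X) \<longrightarrow> (\<forall>i\<in>D. y$i = v$i))"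
    if D: "D \<in> Ms" for D
    using less.hyps Ms_good[OF D] by blast
  have T'eq: "T' = (\<Union>D\<in>Ms. T D)"
  proof
    show "T' \<subseteq> (\<Union>D\<in>Ms. T D)"
    proof
      fix X assume X: "X \<in> T'"
      then obtain M where "M \<in> Mt" "X \<subseteq> M" using Mt_cov by blast
      then have "X \<subseteq> C - {x}" using UMt by auto
      then have "X \<in> H'" using X unfolding H'_def restr_def T'_def by auto
      then obtain D where "D \<in> Ms" "X \<subseteq> D" unfolding Ms_def using maxel_cover[OF finH'] by blast
      then show "X \<in> (\<Union>D\<in>Ms. T D)" using X unfolding T_def T'_def by auto
    qed
    show "(\<Union>D\<in>Ms. T D) \<subseteq> T'"
      using Ms_good xC unfolding T_def T'_def by fastforce
  qed
  have TC: "T C = insert C T'" using CH Ct unfolding T_def T'_def by auto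
  have cH': "construction H' T'"
  proof (cases "C - {x} = {}")
    case True
    have "H' = {}"
    proof (rule equals0I)
      fix X assume "X \<in> H'"
      then have X: "X \<in> H" "X \<subseteq> C - {x}" unfolding H'_def restr_def by auto
      then have "X = {}" using True by blast
      then show False using X(1) ne by simp
    qed
    have "T' = {}"
    proof (rule ccontr)
      assume "T' \<noteq> {}"
      then obtain X where X: "X \<in> T'" by blast
      then obtain M where "M \<in> Mt" "X \<subseteq> M" using Mt_cov by blast
      then have "X = {}" using UMt True by auto
      then show False using X ne unfolding T'_def by auto
    qed
    show ?thesis using construction.empty \<open>H' = {}\<close> \<open>T' = {}\<close> by simp
  next
    case False
    then have "Ms \<noteq> {}" using UMs by auto
    have finMs: "finite Ms" using finH' MsH' by (meson finite_subset)
    show ?thesis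
    proof (cases "card Ms = 1")
      case True
      then obtain D where D: "Ms = {D}" by (rule card_1_singletonE)
      then have "D = C - {x}" using UMs by auto
      then have "H' = restr H D" "T' = T D" using T'eq D H'_def by auto
      then show ?thesis using IH[of D] D by auto
    next
      case False
      have "card Ms \<noteq> 0" using \<open>Ms \<noteq> {}\<close> finMs by auto
      then have c2: "2 \<le> card Ms" using False by linarith
      define P where "P = restr H' ` Ms"
      have fin: "finest_hpartition H' P" and inj: "inj_on (restr H') Ms"
        using maxel_partition[OF finH' neH' satH'] unfolding P_def Ms_def by auto
      have cP: "2 \<le> card P" unfolding P_def using card_image[OF inj] c2 by simp
      have at: "atomic H'" unfolding atomic_def using UH' atom unfolding H'_def restr_def by auto
      have nc: "\<not> hconnected H'"
      proof
        assume hc: "hconnected H'"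
        have p1: "hpartition H' P" using fin unfolding finest_hpartition_def by auto
        have "H' \<noteq> {}" using UH' \<open>C - {x} \<noteq> {}\<close> by auto
        then have p2: "hpartition H' {H'}" unfolding hpartition_def using UH' \<open>C - {x} \<noteq> {}\<close> by auto
        have "P \<noteq> {H'}" using cP by auto
        then show False using hc p1 p2 unfolding hconnected_def by blast
      qed
      have blocks: "\<forall>B\<in>P. construction B (T (\<Union>B))"
      proof
        fix B assume "B \<in> P"
        then obtain D where D: "D \<in> Ms" "B = restr H' D" unfolding P_def by blast
        have "D \<in> H'" using D MsH' by auto
        then have "\<Union>B = D" using D Union_restr by auto
        moreover have "restr H' D = restr H D" using Ms_good[OF D(1)] unfolding H'_def restr_def by auto
        ultimately show "construction B (T (\<Union>B))" using IH[OF D(1)] D(2) by simp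
      qed
      have "construction H' (\<Union>B\<in>P. T (\<Union>B))"
        by (rule construction.disconn[OF at nc fin cP blocks])
      moreover have "(\<Union>B\<in>P. T (\<Union>B)) = T'"
      proof -
        have "(\<Union>B\<in>P. T (\<Union>B)) = (\<Union>D\<in>Ms. T (\<Union>(restr H' D)))" unfolding P_def by simp
        also have "\<dots> = (\<Union>D\<in>Ms. T D)"
        proof (rule SUP_cong)
          fix D assume "D \<in> Ms"
          then have "D \<in> H'" using MsH' by auto
          then show "T (\<Union>(restr H' D)) = T D" using Union_restr[of D H'] by simp
        qed simp
        finally show ?thesis using T'eq by simp
      qed
      ultimately show ?thesis by simp
    qed
  qed
  have cC: "construction (restr H C) (insert C T')"
  proof -
    have at: "atomic (restr H C)" unfolding atomic_def restr_def using atom by auto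
    have UC: "\<Union>(restr H C) = C" using Union_restr[OF CH] .
    have hc: "hconnected (restr H C)" using CH ne UC by (intro connected_if_top[of C]) (auto simp: restr_def)
    have rr: "restr (restr H C) (\<Union>(restr H C) - {x}) = H'" unfolding UC H'_def restr_def by auto
    have "construction (restr H C) (insert (\<Union>(restr H C)) T')"
      by (rule construction.conn[where x=x]) (use at hc UC Cne xC rr cH' in auto)
    then show ?thesis using UC by simp
  qed
  have det: "\<forall>y::real^'n. (\<forall>X\<in>T C. (\<Sum>i\<in>X. y$i) = 3^card X) \<longrightarrow> (\<forall>i\<in>C. y$i = v$i)"
  proof (intro allI impI)
    fix y :: "real^'n" assume hy: "\<forall>X\<in>T C. (\<Sum>i\<in>X. y$i) = 3^card X"
    have eqCx: "\<forall>i\<in>C-{x}. y$i = v$i"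
    proof
      fix i assume "i \<in> C - {x}"
      then obtain D where D: "D \<in> Ms" "i \<in> D" using UMs by auto
      have "\<forall>X\<in>T D. (\<Sum>i\<in>X. y$i) = 3^card X" using hy TC T'eq D by auto
      then show "y$i = v$i" using IH[OF D(1)] D(2) by auto
    qed
    have a1: "(\<Sum>i\<in>C. y$i) = 3^card C" using hy TC by auto
    have a2: "(\<Sum>i\<in>C. v$i) = 3^card C" using Ct unfolding tight_def .
    have a3: "(\<Sum>i\<in>C. y$i) = y$x + (\<Sum>i\<in>C-{x}. y$i)" using xC by (simp add: sum.remove)
    have a4: "(\<Sum>i\<in>C. v$i) = v$x + (\<Sum>i\<in>C-{x}. v$i)" using xC by (simp add: sum.remove)
    have a5: "(\<Sum>i\<in>C-{x}. y$i) = (\<Sum>i\<in>C-{x}. v$i)" using eqCx by (intro sum.cong) auto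
    have "y$x = v$x" using a1 a2 a3 a4 a5 by linarith
    then show "\<forall>i\<in>C. y$i = v$i" using eqCx by auto
  qed
  show ?case using cC det TC by simp
qed

end

theorem proposition9p3:
  fixes H :: "('n::finite) set set" and v :: "real^'n"
  assumes "ASC H"
    and "\<Union>H = UNIV"
    and "{v} face_of GH H"
  shows "\<exists>K. construction H K \<and> {v} = \<Inter>(hplane ` K) \<and> (\<forall>Y\<in>H - K. v \<notin> hplane Y)"
proof -
  have hg: "hypergraph H" and at: "atomic H" and sat: "saturated H" and hc: "hconnected H"
    using assms(1) unfolding ASC_def by auto
  have ne: "{} \<notin> H" using hg unfolding hypergraph_def by auto
  have atom: "{i} \<in> H" for i using at assms(2) unfolding atomic_def by auto
  have ext: "v extreme_point_of GH H" using assms(3) face_of_singleton by blast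
  then have vG: "v \<in> GH H" unfolding extreme_point_of_def by auto
  have top: "(\<Sum>i\<in>UNIV. v$i) = 3^CARD('n)"
    using vG unfolding GH_def assms(2) hplane_def by auto
  have ge: "3^card X \<le> (\<Sum>i\<in>X. v$i)" if X: "X \<in> H" for X
  proof (cases "X = UNIV")
    case True then show ?thesis using top by simp
  next
    case False
    then have "X \<in> H - {\<Union>H}" using X assms(2) by auto
    then show ?thesis using vG unfolding GH_def hhalf_def by auto
  qed
  interpret vtx H v
    by unfold_locales (use ne atom sat ge top assms(2) ext in auto)
  have finH: "finite H" by simp
  have UH: "UNIV \<in> H"
  proof -
    define Ms where "Ms = maxel H"
    have finMs: "finite Ms" using finH maxel_sub[of H] unfolding Ms_def by (meson finite_subset)
    have UMs: "\<Union>Ms = UNIV" unfolding Ms_def using maxel_Union[OF finH] assms(2) by simp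
    then have "Ms \<noteq> {}" by auto
    then have c0: "card Ms \<noteq> 0" using finMs by auto
    have "card Ms = 1"
    proof (rule ccontr)
      assume "card Ms \<noteq> 1"
      then have c2: "2 \<le> card Ms" using c0 by linarith
      define P where "P = restr H ` Ms"
      have fin: "finest_hpartition H P" and inj: "inj_on (restr H) Ms"
        using maxel_partition[OF finH ne sat] unfolding P_def Ms_def by auto
      have cP: "2 \<le> card P" unfolding P_def using card_image[OF inj] c2 by simp
      have p1: "hpartition H P" using fin unfolding finest_hpartition_def by auto
      have "H \<noteq> {}" using atom by auto
      then have p2: "hpartition H {H}" unfolding hpartition_def using assms(2) by auto
      have "P \<noteq> {H}" using cP by auto
      then show False using hc p1 p2 unfolding hconnected_def by blast
    qed
    then obtain D where D: "Ms = {D}" by (rule card_1_singletonE)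
    then have "D = UNIV" using UMs by auto
    moreover have "D \<in> H" using D maxel_sub[of H] unfolding Ms_def by auto
    ultimately show ?thesis by simp
  qed
  have tU: "tight UNIV" unfolding tight_def using top by simp
  have M: "construction (restr H UNIV) (T UNIV) \<and>
    (\<forall>y::real^'n. (\<forall>X\<in>T UNIV. (\<Sum>i\<in>X. y$i) = 3^card X) \<longrightarrow> (\<forall>i\<in>UNIV. y$i = v$i))"
    using main[OF UH tU] .
  have rH: "restr H UNIV = H" unfolding restr_def by auto
  have TU: "T UNIV = {X\<in>H. tight X}" unfolding T_def by auto
  show ?thesis
  proof (intro exI conjI)
    show "construction H (T UNIV)" using M rH by simp
    show "{v} = \<Inter>(hplane ` T UNIV)"
    proof
      show "{v} \<subseteq> \<Inter>(hplane ` T UNIV)" unfolding TU hplane_def tight_def by auto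
      show "\<Inter>(hplane ` T UNIV) \<subseteq> {v}"
      proof
        fix y assume "y \<in> \<Inter>(hplane ` T UNIV)"
        then have "\<forall>X\<in>T UNIV. (\<Sum>i\<in>X. y$i) = 3^card X" unfolding hplane_def by auto
        then have "\<forall>i. y$i = v$i" using M by auto
        then show "y \<in> {v}" by (simp add: vec_eq_iff)
      qed
    qed
    show "\<forall>Y\<in>H - T UNIV. v \<notin> hplane Y" unfolding TU hplane_def tight_def by auto
  qed
qed

end
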